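(* Let $I\neq\emptyset$ and let $(I_j)_{j\in J}$ be a partition of $I$. For every $j\in J$ let $K_j\subseteq T^{I_j}$ be a compact set which is a set of uniqueness for $A(\overline{D}^{I_j})$. Then the compact set $K=\prod_{j\in J}K_j\subseteq\prod_{j\in J}T^{I_j}\equiv T^I$ is a set of uniqueness for $A(\overline{D}^I)$.
   Context: $\overline{D}=\{z\in\mathbb{C}:|z|\le1\}$, $T=\{z\in\mathbb{C}:|z|=1\}$, with product topologies on all products. For a non-empty set $S$, $A(\overline{D}^S)$ is the set of all functions $f:\overline{D}^S\to\mathbb{C}$ that are continuous and such that for every $s_0\in S$ and every $z\in\overline{D}^S$ the function of one variable obtained by varying only the coordinate $s_0$ (keeping the others equal to those of $z$) belongs to the disc algebra $A(\overline{D})$ (continuous on $\overline{D}$, holomorphic on the open disc). A compact set $K\subseteq T^S$ is a set of uniqueness for $A(\overline{D}^S)$ if any $f,g\in A(\overline{D}^S)$ with $f|_K=g|_K$ satisfy $f\equiv g$ on $\overline{D}^S$. *)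

theory Defs
  imports "HOL-Analysis.Analysis"
begin

text \<open>Points of the polydisc \<open>D^S\<close> are modelled as extensional functions
  \<open>'i \<Rightarrow> complex\<close> in \<open>PiE S (\<lambda>_. cball 0 1)\<close>, carrying the product topology.\<close>

definition polydisc :: "'i set \<Rightarrow> ('i \<Rightarrow> complex) set" where
  "polydisc S = PiE S (\<lambda>_. cball 0 1)"

definition torus :: "'i set \<Rightarrow> ('i \<Rightarrow> complex) set" where
  "torus S = PiE S (\<lambda>_. sphere 0 1)"

definition disc_algebra :: "(complex \<Rightarrow> complex) \<Rightarrow> bool" where
  "disc_algebra h \<longleftrightarrow> continuous_on (cball 0 1) h \<and> h holomorphic_on ball 0 1"

definition poly_disc_algebra :: "'i set \<Rightarrow> (('i \<Rightarrow> complex) \<Rightarrow> complex) \<Rightarrow> bool" where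
  "poly_disc_algebra S f \<longleftrightarrow>
     continuous_map (subtopology (product_topology (\<lambda>_. euclidean) S) (polydisc S)) euclidean f \<and>
     (\<forall>s0\<in>S. \<forall>z\<in>polydisc S. disc_algebra (\<lambda>w. f (z(s0 := w))))"

definition uniqueness_set :: "'i set \<Rightarrow> ('i \<Rightarrow> complex) set \<Rightarrow> bool" where
  "uniqueness_set S K \<longleftrightarrow>
     compactin (product_topology (\<lambda>_. euclidean) S) K \<and> K \<subseteq> torus S \<and>
     (\<forall>f g. poly_disc_algebra S f \<longrightarrow> poly_disc_algebra S g \<longrightarrow>
        (\<forall>x\<in>K. f x = g x) \<longrightarrow> (\<forall>x\<in>polydisc S. f x = g x))"

end

theory Submission
  imports Defs
begin

lemma merge_pda:
  fixes f :: "('i \<Rightarrow> complex) \<Rightarrow> complex"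
  assumes f: "poly_disc_algebra I f" and B: "B \<subseteq> I" and y: "y \<in> polydisc I"
  shows "poly_disc_algebra B (\<lambda>u. f (\<lambda>i. if i \<in> B then u i else y i))"
proof -
  let ?m = "\<lambda>u. (\<lambda>i. if i \<in> B then u i else y i)"
  have mem: "?m u \<in> polydisc I" if "u \<in> polydisc B" for u
    using that y B unfolding polydisc_def by (auto simp: PiE_iff extensional_def)
  have cm: "continuous_map (subtopology (product_topology (\<lambda>_. euclidean) B) (polydisc B))
      (subtopology (product_topology (\<lambda>_. euclidean) I) (polydisc I)) ?m"
  proof (subst continuous_map_in_subtopology, intro conjI)
    show "continuous_map (subtopology (product_topology (\<lambda>_. euclidean) B) (polydisc B))
      (product_topology (\<lambda>_. euclidean) I) ?m"
    proof (subst continuous_map_componentwise, intro conjI ballI)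
      show "?m ` topspace (subtopology (product_topology (\<lambda>_. euclidean) B) (polydisc B)) \<subseteq> extensional I"
        using mem by (auto simp: polydisc_def PiE_iff)
    next
      fix k assume "k \<in> I"
      show "continuous_map (subtopology (product_topology (\<lambda>_. euclidean) B) (polydisc B)) euclidean (\<lambda>x. ?m x k)"
      proof (cases "k \<in> B")
        case True
        then show ?thesis
          using continuous_map_from_subtopology[OF continuous_map_product_projection[OF True]] by simp
      next
        case False
        then show ?thesis by simp
      qed
    qed
    show "?m \<in> topspace (subtopology (product_topology (\<lambda>_. euclidean) B) (polydisc B)) \<rightarrow> polydisc I"
      using mem by auto
  qed
  have fc: "continuous_map (subtopology (product_topology (\<lambda>_. euclidean) I) (polydisc I)) euclidean f"
    using f unfolding poly_disc_algebra_def by blast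
  show ?thesis
    unfolding poly_disc_algebra_def
  proof (intro conjI ballI)
    show "continuous_map (subtopology (product_topology (\<lambda>_. euclidean) B) (polydisc B)) euclidean (\<lambda>u. f (?m u))"
      using continuous_map_compose[OF cm fc] by (simp add: o_def)
  next
    fix s0 z assume s0: "s0 \<in> B" and z: "z \<in> polydisc B"
    have eq: "(\<lambda>w. f (?m (z(s0 := w)))) = (\<lambda>w. f ((?m z)(s0 := w)))"
      using s0 by (intro ext arg_cong[where f=f]) auto
    show "disc_algebra (\<lambda>w. f (?m (z(s0 := w))))"
      unfolding eq using f s0 B mem[OF z] unfolding poly_disc_algebra_def by blast
  qed
qed

lemma const_pda: "poly_disc_algebra S (\<lambda>_. c)"
  unfolding poly_disc_algebra_def disc_algebra_def by auto

lemma polydisc_ne: "polydisc S \<noteq> {}"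
  unfolding polydisc_def by (simp add: PiE_eq_empty_iff)

lemma uniq_ne:
  assumes "uniqueness_set S K" shows "K \<noteq> {}"
proof
  assume "K = {}"
  then have "\<forall>x\<in>polydisc S. (0::complex) = 1"
    using assms const_pda[of S 0] const_pda[of S 1] unfolding uniqueness_set_def by blast
  then show False using polydisc_ne by auto
qed

theorem proposition3p8:
  fixes I :: "'i set" and J :: "'j set" and P :: "'j \<Rightarrow> 'i set"
    and Ks :: "'j \<Rightarrow> ('i \<Rightarrow> complex) set"
  assumes "I \<noteq> {}"
    and "\<forall>j\<in>J. P j \<noteq> {}"
    and "\<forall>j\<in>J. \<forall>k\<in>J. j \<noteq> k \<longrightarrow> P j \<inter> P k = {}"
    and "(\<Union>j\<in>J. P j) = I"
    and "\<forall>j\<in>J. uniqueness_set (P j) (Ks j)"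
  shows "uniqueness_set I {x \<in> extensional I. \<forall>j\<in>J. restrict x (P j) \<in> Ks j}"
proof -
  define K where "K = {x \<in> extensional I. \<forall>j\<in>J. restrict x (P j) \<in> Ks j}"
  define E where "E = product_topology (\<lambda>_::'i. (euclidean::complex topology)) I"
  have Jne: "J \<noteq> {}" using assms(1,4) by auto
  have PI: "\<And>j. j \<in> J \<Longrightarrow> P j \<subseteq> I" using assms(4) by auto
  have Kst: "\<And>j. j \<in> J \<Longrightarrow> Ks j \<subseteq> torus (P j)"
    using assms(5) unfolding uniqueness_set_def by blast
  have Ksub: "K \<subseteq> torus I"
  proof
    fix x assume x: "x \<in> K"
    have "x i \<in> sphere 0 1" if iI: "i \<in> I" for i
    proof -
      obtain j where j: "j \<in> J" "i \<in> P j" using iI assms(4) by blast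
      have "restrict x (P j) \<in> torus (P j)" using x j Kst unfolding K_def by blast
      then show ?thesis using j unfolding torus_def by (auto simp: PiE_iff)
    qed
    then show "x \<in> torus I" using x unfolding K_def torus_def by (auto simp: PiE_iff)
  qed
  have tc: "compactin E (torus I)"
    unfolding E_def torus_def by (simp add: compactin_PiE)
  have Keq: "K = (\<Inter>j\<in>J. {x \<in> topspace E. restrict x (P j) \<in> Ks j})"
    using Jne Ksub unfolding K_def E_def torus_def by (auto simp: PiE_iff)
  have cl: "closedin E K"
    unfolding Keq
  proof (rule closedin_Inter)
    show "(\<lambda>j. {x \<in> topspace E. restrict x (P j) \<in> Ks j}) ` J \<noteq> {}" using Jne by auto
  next
    fix C assume "C \<in> (\<lambda>j. {x \<in> topspace E. restrict x (P j) \<in> Ks j}) ` J"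
    then obtain j where j: "j \<in> J" and C: "C = {x \<in> topspace E. restrict x (P j) \<in> Ks j}" by auto
    have cm: "continuous_map E (product_topology (\<lambda>_::'i. (euclidean::complex topology)) (P j)) (\<lambda>x. restrict x (P j))"
      unfolding E_def
    proof (subst continuous_map_componentwise, intro conjI ballI)
      fix k assume k: "k \<in> P j"
      then have "k \<in> I" using PI j by auto
      then show "continuous_map (product_topology (\<lambda>_. euclidean) I) euclidean (\<lambda>x. restrict x (P j) k)"
        using continuous_map_product_projection[of k I "\<lambda>_. euclidean"] k by simp
    qed auto
    have "closedin (product_topology (\<lambda>_::'i. (euclidean::complex topology)) (P j)) (Ks j)"
      using assms(5) j by (intro compactin_imp_closedin) (auto simp: uniqueness_set_def Hausdorff_space_product_topology)
    then show "closedin E C" unfolding C by (rule closedin_continuous_map_preimage[OF cm])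
  qed
  have compK: "compactin E K" by (rule closed_compactin[OF tc Ksub cl])
  have uniq: "\<forall>x\<in>polydisc I. f x = g x"
    if pf: "poly_disc_algebra I f" and pg: "poly_disc_algebra I g" and fg: "\<forall>x\<in>K. f x = g x" for f g
  proof -
    have KU: "\<And>j. j \<in> J \<Longrightarrow> uniqueness_set (P j) (Ks j)" using assms(5) by blast
    define pick where "pick j = (SOME k. k \<in> Ks j)" for j
    have pick: "pick j \<in> Ks j" if "j \<in> J" for j
      using uniq_ne[OF KU[OF that]] unfolding pick_def by (simp add: some_in_eq)
    have step: "\<forall>x\<in>polydisc I. (\<forall>j\<in>J-F. restrict x (P j) \<in> Ks j) \<longrightarrow> f x = g x"
      if "finite F" for F
      using that
    proof (induction F rule: finite_induct)
      case empty
      show ?case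
      proof (intro ballI impI)
        fix x assume "x \<in> polydisc I" "\<forall>j\<in>J - {}. restrict x (P j) \<in> Ks j"
        then have "x \<in> K" unfolding K_def polydisc_def by (auto simp: PiE_iff)
        then show "f x = g x" using fg by blast
      qed
    next
      case (insert j F)
      show ?case
      proof (intro ballI impI)
        fix x assume x: "x \<in> polydisc I" and xr: "\<forall>j'\<in>J - insert j F. restrict x (P j') \<in> Ks j'"
        show "f x = g x"
        proof (cases "j \<in> J")
          case False
          then have "J - insert j F = J - F" by auto
          then show ?thesis using insert.IH x xr by (metis (no_types, lifting))
        next
          case True
          let ?m = "\<lambda>u. (\<lambda>i. if i \<in> P j then u i else x i)"
          have PF: "poly_disc_algebra (P j) (\<lambda>u. f (?m u))" by (rule merge_pda[OF pf PI[OF True] x])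
          have PG: "poly_disc_algebra (P j) (\<lambda>u. g (?m u))" by (rule merge_pda[OF pg PI[OF True] x])
          have agree: "\<forall>u\<in>Ks j. f (?m u) = g (?m u)"
          proof
            fix u assume u: "u \<in> Ks j"
            have ut: "u \<in> torus (P j)" using Kst True u by blast
            have mp: "?m u \<in> polydisc I"
              using ut x PI[OF True] unfolding torus_def polydisc_def by (auto simp: PiE_iff extensional_def)
            have "\<forall>j'\<in>J - F. restrict (?m u) (P j') \<in> Ks j'"
            proof
              fix j' assume j': "j' \<in> J - F"
              show "restrict (?m u) (P j') \<in> Ks j'"
              proof (cases "j' = j")
                case True
                have "restrict (?m u) (P j) = u" using ut unfolding torus_def
                  by (auto simp: restrict_def PiE_iff extensional_def fun_eq_iff)
                then show ?thesis using u True by simp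
              next
                case False
                have disj: "P j \<inter> P j' = {}" using assms(3) \<open>j\<in>J\<close> j' False by blast
                have "restrict (?m u) (P j') = restrict x (P j')" using disj by (auto simp: restrict_def fun_eq_iff)
                then show ?thesis using xr j' False by auto
              qed
            qed
            then show "f (?m u) = g (?m u)" using insert.IH mp by blast
          qed
          have all: "\<forall>u\<in>polydisc (P j). f (?m u) = g (?m u)"
            using KU[OF True] PF PG agree unfolding uniqueness_set_def by blast
          have rx: "restrict x (P j) \<in> polydisc (P j)" using x PI[OF True] unfolding polydisc_def by auto
          have "?m (restrict x (P j)) = x" by (auto simp: fun_eq_iff)
          then show ?thesis using all rx by metis
        qed
      qed
    qed
    show ?thesis
    proof (rule ccontr)
      assume "\<not> ?thesis"
      then obtain z where z: "z \<in> polydisc I" "f z \<noteq> g z" by blast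
      let ?X = "subtopology E (polydisc I)"
      have hc: "continuous_map ?X euclidean (\<lambda>x. f x - g x)"
        using pf pg continuous_map_diff unfolding poly_disc_algebra_def E_def by blast
      have "openin ?X {x \<in> topspace ?X. f x - g x \<in> -{0}}"
        by (rule openin_continuous_map_preimage[OF hc]) auto
      then obtain T where T: "openin E T" and Teq: "{x \<in> topspace ?X. f x - g x \<in> -{0}} = T \<inter> polydisc I"
        by (auto simp: openin_subtopology)
      have pdE: "polydisc I \<subseteq> topspace E" unfolding E_def polydisc_def by auto
      have zT: "z \<in> T" using z pdE Teq by auto
      obtain U where U: "finite {i\<in>I. U i \<noteq> UNIV}" "\<forall>i\<in>I. open (U i)" "z \<in> PiE I U" "PiE I U \<subseteq> T"
        using T zT unfolding E_def openin_product_topology_alt by auto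
      define C where "C = {i\<in>I. U i \<noteq> UNIV}"
      define blk where "blk i = (SOME j. j \<in> J \<and> i \<in> P j)" for i
      have blk: "blk i \<in> J \<and> i \<in> P (blk i)" if "i \<in> I" for i
      proof -
        have "\<exists>j. j \<in> J \<and> i \<in> P j" using that assms(4) by blast
        then show ?thesis unfolding blk_def by (rule someI_ex)
      qed
      have blk_eq: "blk i = j" if "j \<in> J" "i \<in> P j" for i j
        using blk[of i] assms(3) PI that by blast
      define F where "F = blk ` C"
      have finF: "finite F" using U(1) unfolding C_def F_def by simp
      define x where "x i = (if i \<in> I \<and> blk i \<notin> F then pick (blk i) i else z i)" for i
      have pt: "pick j \<in> torus (P j)" if "j \<in> J" for j using pick[OF that] Kst[OF that] by blast
      have xI: "x \<in> polydisc I"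
      proof -
        have "x i \<in> cball 0 1" if "i \<in> I" for i
        proof (cases "blk i \<notin> F")
          case True
          then have "x i = pick (blk i) i" using that unfolding x_def by simp
          moreover have "pick (blk i) i \<in> sphere 0 1" using pt[of "blk i"] blk[OF that] unfolding torus_def by (auto simp: PiE_iff)
          ultimately show ?thesis by simp
        next
          case False
          then show ?thesis using z(1) that unfolding x_def polydisc_def by auto
        qed
        moreover have "x i = undefined" if "i \<notin> I" for i using that z(1) unfolding x_def polydisc_def by (auto simp: PiE_iff extensional_def)
        ultimately show ?thesis unfolding polydisc_def by (auto simp: PiE_iff extensional_def)
      qed
      have xr: "\<forall>j\<in>J-F. restrict x (P j) \<in> Ks j"
      proof
        fix j assume j: "j \<in> J - F"
        have "restrict x (P j) = pick j"
        proof
          fix i show "restrict x (P j) i = pick j i"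
          proof (cases "i \<in> P j")
            case True
            then have "i \<in> I" "blk i = j" using PI j blk_eq by auto
            then show ?thesis using True j unfolding x_def by auto
          next
            case False
            then show ?thesis using pt[of j] j unfolding torus_def by (auto simp: PiE_iff extensional_def)
          qed
        qed
        then show "restrict x (P j) \<in> Ks j" using pick j by auto
      qed
      have xU: "x \<in> PiE I U"
      proof -
        have "x i \<in> U i" if "i \<in> I" for i
        proof (cases "blk i \<notin> F")
          case True
          then have "i \<notin> C" unfolding F_def by auto
          then show ?thesis using that unfolding C_def by auto
        next
          case False
          then show ?thesis using U(3) that unfolding x_def by auto
        qed
        then show ?thesis using xI unfolding polydisc_def by (auto simp: PiE_iff)
      qed
      have "x \<in> T" using xU U(4) by blast
      then have "f x \<noteq> g x" using Teq xI pdE by auto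
      moreover have "f x = g x" using step[OF finF] xI xr by blast
      ultimately show False by simp
    qed
  qed
  show ?thesis
    using compK Ksub uniq unfolding uniqueness_set_def K_def E_def by blast
qed

end
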